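(* Let $\mathcal N$ be a finite ground set, $f:2^{\mathcal N}\to\mathbb R$ monotone and submodular, $k\ge1$ an integer, and $O$ an optimal solution to $\max\{f(S):|S|\le k\}$. Consider the following algorithm: initialize $A\leftarrow\emptyset$; for each $u\in\mathcal N$ in turn, if $\Delta(u\mid A)\ge f(A)/k$ then $A\leftarrow A\cup\{u\}$; finally return $A'$, the set of the last $k$ elements added to $A$ (or all of $A$ if fewer than $k$ were added). Then $4f(A')\ge f(O)$.
   Context: $f$ is submodular if $f(T\cup\{x\})-f(T)\le f(S\cup\{x\})-f(S)$ for all $S\subseteq T\subseteq\mathcal N$, $x\notin T$; monotone if $f(S)\le f(T)$ for $S\subseteq T$. $\Delta(x\mid S)=f(S\cup\{x\})-f(S)$. *)

theory Defs
  imports Complex_Main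
begin

definition submodular_on :: "'a set \<Rightarrow> ('a set \<Rightarrow> real) \<Rightarrow> bool" where
  "submodular_on N f \<longleftrightarrow>
     (\<forall>S T x. S \<subseteq> T \<and> T \<subseteq> N \<and> x \<in> N \<and> x \<notin> T \<longrightarrow>
        f (T \<union> {x}) - f T \<le> f (S \<union> {x}) - f S)"

definition monotone_on_sets :: "'a set \<Rightarrow> ('a set \<Rightarrow> real) \<Rightarrow> bool" where
  "monotone_on_sets N f \<longleftrightarrow> (\<forall>S T. S \<subseteq> T \<and> T \<subseteq> N \<longrightarrow> f S \<le> f T)"

definition marginal :: "('a set \<Rightarrow> real) \<Rightarrow> 'a \<Rightarrow> 'a set \<Rightarrow> real" where
  "marginal f x S = f (S \<union> {x}) - f S"

text \<open>Streaming pass: processes the elements in the order of the input list;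
  the accumulator is the list of elements added to A so far, in order of addition.\<close>
fun stream_added :: "('a set \<Rightarrow> real) \<Rightarrow> nat \<Rightarrow> 'a list \<Rightarrow> 'a list \<Rightarrow> 'a list" where
  "stream_added f k [] L = L"
| "stream_added f k (u # us) L =
     (if marginal f u (set L) \<ge> f (set L) / real k
      then stream_added f k us (L @ [u])
      else stream_added f k us L)"

definition stream_output :: "('a set \<Rightarrow> real) \<Rightarrow> nat \<Rightarrow> 'a list \<Rightarrow> 'a set" where
  "stream_output f k order =
     (let L = stream_added f k order [] in set (drop (length L - k) L))"

end

theory Submission
  imports Defs
begin

lemma sub_set:
  assumes sub: "submodular_on N f" and mono: "monotone_on_sets N f"
    and "finite B" "B \<subseteq> N" "S \<subseteq> T" "T \<subseteq> N"
  shows "f (T \<union> B) - f T \<le> f (S \<union> B) - f S"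
  using assms(3,4)
proof (induction B rule: finite_induct)
  case empty
  then show ?case by simp
next
  case (insert b B)
  have IH: "f (T \<union> B) - f T \<le> f (S \<union> B) - f S" using insert by auto
  have "f (T \<union> insert b B) - f (T \<union> B) \<le> f (S \<union> insert b B) - f (S \<union> B)"
  proof (cases "b \<in> T \<union> B")
    case True
    then have e: "T \<union> insert b B = T \<union> B" by auto
    have "f (S \<union> B) \<le> f (S \<union> insert b B)"
    proof -
      have "S \<union> B \<subseteq> S \<union> insert b B" by blast
      moreover have "S \<union> insert b B \<subseteq> N" using insert.prems assms(5,6) by blast
      ultimately show ?thesis using mono unfolding monotone_on_sets_def by simp
    qed
    then show ?thesis using e by simp
  next
    case False
    have s1: "S \<union> B \<subseteq> T \<union> B" using assms(5) by auto
    have s2: "T \<union> B \<subseteq> N" using assms(6) insert.prems by auto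
    have s3: "b \<in> N" using insert.prems by auto
    have "f ((T \<union> B) \<union> {b}) - f (T \<union> B) \<le> f ((S \<union> B) \<union> {b}) - f (S \<union> B)"
      using sub False s1 s2 s3 unfolding submodular_on_def by simp
    then show ?thesis by simp
  qed
  then show ?case using IH by linarith
qed

lemma sum_bound:
  assumes sub: "submodular_on N f" and mono: "monotone_on_sets N f"
    and "finite B" "B \<subseteq> N" "T \<subseteq> N"
  shows "f (T \<union> B) - f T \<le> (\<Sum>b\<in>B. marginal f b T)"
  using assms(3,4)
proof (induction B rule: finite_induct)
  case empty
  then show ?case by simp
next
  case (insert b B)
  have IH: "f (T \<union> B) - f T \<le> (\<Sum>b\<in>B. marginal f b T)" using insert by auto
  have h1: "f ((T \<union> B) \<union> {b}) - f (T \<union> B) \<le> f (T \<union> {b}) - f T"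
    apply (rule sub_set[OF sub mono])
    using insert.prems assms(5) by auto
  have e: "T \<union> insert b B = (T \<union> B) \<union> {b}" by auto
  have s: "(\<Sum>b\<in>insert b B. marginal f b T) = marginal f b T + (\<Sum>b\<in>B. marginal f b T)"
    using insert.hyps by (rule sum.insert)
  have "f (T \<union> insert b B) - f T = (f ((T \<union> B) \<union> {b}) - f (T \<union> B)) + (f (T \<union> B) - f T)"
    unfolding e by linarith
  also have "\<dots> \<le> marginal f b T + (\<Sum>b\<in>B. marginal f b T)"
    using IH h1 unfolding marginal_def by linarith
  also have "\<dots> = (\<Sum>b\<in>insert b B. marginal f b T)" using s by linarith
  finally show ?case .
qed

lemma sa_app: "\<exists>M. stream_added f k us L = L @ M \<and> set M \<subseteq> set us"
proof (induction us arbitrary: L)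
  case Nil
  then show ?case by simp
next
  case (Cons u us)
  obtain M1 where M1: "stream_added f k us (L @ [u]) = (L @ [u]) @ M1" "set M1 \<subseteq> set us"
    using Cons by blast
  obtain M2 where M2: "stream_added f k us L = L @ M2" "set M2 \<subseteq> set us"
    using Cons by blast
  show ?case
  proof (cases "marginal f u (set L) \<ge> f (set L) / real k")
    case True
    then show ?thesis using M1 by (intro exI[of _ "u # M1"]) auto
  next
    case False
    then show ?thesis using M2 by (intro exI[of _ M2]) auto
  qed
qed

lemma sa_growth:
  "length L \<le> i \<Longrightarrow> i < length (stream_added f k us L) \<Longrightarrow>
   marginal f (stream_added f k us L ! i) (set (take i (stream_added f k us L)))
     \<ge> f (set (take i (stream_added f k us L))) / real k"
proof (induction us arbitrary: L)
  case Nil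
  then show ?case by simp
next
  case (Cons u us)
  show ?case
  proof (cases "marginal f u (set L) \<ge> f (set L) / real k")
    case True
    obtain M1 where M1: "stream_added f k us (L @ [u]) = (L @ [u]) @ M1"
      using sa_app[of f k us "L @ [u]"] by blast
    show ?thesis
    proof (cases "i = length L")
      case True2: True
      then show ?thesis using True M1 by (simp add: nth_append)
    next
      case False
      then show ?thesis using True Cons by simp
    qed
  next
    case False
    then show ?thesis using Cons by simp
  qed
qed

lemma sa_reject:
  assumes sub: "submodular_on N f" and mono: "monotone_on_sets N f"
    and "set us \<subseteq> N" "set L \<subseteq> N"
  shows "\<forall>u\<in>set us. u \<in> set (stream_added f k us L) \<or>
     marginal f u (set (stream_added f k us L)) \<le> f (set (stream_added f k us L)) / real k"
  using assms(3,4)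
proof (induction us arbitrary: L)
  case Nil
  then show ?case by simp
next
  case (Cons u us)
  show ?case
  proof (cases "marginal f u (set L) \<ge> f (set L) / real k")
    case True
    obtain M1 where M1: "stream_added f k us (L @ [u]) = (L @ [u]) @ M1"
      using sa_app[of f k us "L @ [u]"] by blast
    have "\<forall>v\<in>set us. v \<in> set (stream_added f k us (L @ [u])) \<or>
     marginal f v (set (stream_added f k us (L @ [u]))) \<le> f (set (stream_added f k us (L @ [u]))) / real k"
      using Cons by auto
    then show ?thesis using True M1 by auto
  next
    case False
    let ?R = "stream_added f k us L"
    obtain M2 where M2: "?R = L @ M2" "set M2 \<subseteq> set us"
      using sa_app[of f k us L] by blast
    have RN: "set ?R \<subseteq> N" using M2 Cons.prems by auto
    have IH: "\<forall>v\<in>set us. v \<in> set ?R \<or> marginal f v (set ?R) \<le> f (set ?R) / real k"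
      using Cons by auto
    have "u \<in> set ?R \<or> marginal f u (set ?R) \<le> f (set ?R) / real k"
    proof (cases "u \<in> set ?R")
      case True then show ?thesis by simp
    next
      case nin: False
      have uN: "u \<in> N" using Cons.prems by auto
      have LR: "set L \<subseteq> set ?R" using M2 by auto
      have "f (set ?R \<union> {u}) - f (set ?R) \<le> f (set L \<union> {u}) - f (set L)"
        using sub nin uN RN LR unfolding submodular_on_def by blast
      then have "marginal f u (set ?R) \<le> marginal f u (set L)"
        unfolding marginal_def .
      moreover have "f (set L) \<le> f (set ?R)"
        using mono RN M2 unfolding monotone_on_sets_def by auto
      then have "f (set L) / real k \<le> f (set ?R) / real k"
        by (simp add: divide_right_mono)
      ultimately show ?thesis using False by simp
    qed
    then show ?thesis using IH False by auto
  qed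
qed

lemma pow_growth:
  fixes g :: "nat \<Rightarrow> real" and c :: real
  assumes "c \<ge> 0" "\<And>j. j < m \<Longrightarrow> g (Suc j) \<ge> c * g j" "\<And>j. j \<le> m \<Longrightarrow> g j \<ge> 0"
  shows "i + d \<le> m \<Longrightarrow> g (i + d) \<ge> c ^ d * g i"
proof (induction d)
  case 0
  then show ?case by simp
next
  case (Suc d)
  have "c ^ Suc d * g i = c * (c ^ d * g i)" by simp
  also have "\<dots> \<le> c * g (i + d)" using Suc assms(1) by (simp add: mult_left_mono)
  also have "\<dots> \<le> g (Suc (i + d))" using assms(2) Suc.prems by simp
  finally show ?case by simp
qed

theorem theorem4:
  fixes N :: "'a set" and f :: "'a set \<Rightarrow> real" and k :: nat
    and Opt :: "'a set" and order :: "'a list"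
  assumes "finite N"
    and "set order = N" and "distinct order"
    and "monotone_on_sets N f"
    and "submodular_on N f"
    and "\<forall>S\<subseteq>N. f S \<ge> 0"
    and "k \<ge> 1"
    and "Opt \<subseteq> N" and "card Opt \<le> k"
    and "\<forall>S. S \<subseteq> N \<and> card S \<le> k \<longrightarrow> f S \<le> f Opt"
  shows "4 * f (stream_output f k order) \<ge> f Opt"
proof -
  note mono = assms(4) and sub = assms(5) and nonneg = assms(6)
  define R where "R = stream_added f k order []"
  define m where "m = length R"
  define A where "A = set R"
  have AN: "A \<subseteq> N" using sa_app[of f k order "[]"] assms(2) unfolding A_def R_def by auto
  have finA: "finite A" unfolding A_def by simp
  have kpos: "real k > 0" using assms(7) by simp
  have fA0: "f A \<ge> 0" using nonneg AN by blast
  have rej: "\<forall>u\<in>set order. u \<in> A \<or> marginal f u A \<le> f A / real k"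
    using sa_reject[OF sub mono, of order "[]" k] assms(2) unfolding A_def R_def by auto
  have mOpt: "\<And>y. y \<in> Opt \<Longrightarrow> marginal f y A \<le> f A / real k"
  proof -
    fix y assume y: "y \<in> Opt"
    show "marginal f y A \<le> f A / real k"
    proof (cases "y \<in> A")
      case True
      then have "A \<union> {y} = A" by auto
      then show ?thesis using fA0 kpos by (simp add: marginal_def)
    next
      case False
      then show ?thesis using rej y assms(2,8) by auto
    qed
  qed
  have finOpt: "finite Opt" using assms(1,8) finite_subset by blast
  have "f Opt \<le> f (A \<union> Opt)"
    using mono AN assms(8) unfolding monotone_on_sets_def by auto
  also have "\<dots> \<le> f A + (\<Sum>y\<in>Opt. marginal f y A)"
    using sum_bound[OF sub mono finOpt assms(8) AN] by linarith
  also have "(\<Sum>y\<in>Opt. marginal f y A) \<le> (\<Sum>y\<in>Opt. f A / real k)"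
    using mOpt by (rule sum_mono)
  also have "(\<Sum>y\<in>Opt. f A / real k) = real (card Opt) * (f A / real k)" by simp
  also have "\<dots> \<le> real k * (f A / real k)"
    using assms(9) fA0 kpos by (intro mult_right_mono) auto
  also have "\<dots> = f A" using kpos by simp
  finally have opt2: "f Opt \<le> 2 * f A" by linarith
  have out: "stream_output f k order = set (drop (m - k) R)"
    unfolding stream_output_def R_def m_def Let_def by simp
  have half: "2 * f (set (drop (m - k) R)) \<ge> f A"
  proof (cases "m \<le> k")
    case True
    then have "drop (m - k) R = R" by simp
    then show ?thesis using fA0 unfolding A_def by simp
  next
    case False
    define g where "g j = f (set (take j R))" for j
    define P where "P = set (take (m - k) R)"
    define A' where "A' = set (drop (m - k) R)"
    have takeN: "set (take j R) \<subseteq> N" for j using AN unfolding A_def by (meson order_trans set_take_subset)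
    have g0: "g j \<ge> 0" for j using nonneg takeN unfolding g_def by blast
    have gstep: "g (Suc j) \<ge> (1 + 1 / real k) * g j" if "j < m" for j
    proof -
      have "marginal f (R ! j) (set (take j R)) \<ge> f (set (take j R)) / real k"
        using sa_growth[of "[]" j f k order] that unfolding R_def m_def by simp
      moreover have "set (take (Suc j) R) = set (take j R) \<union> {R ! j}"
        using that unfolding m_def by (simp add: take_Suc_conv_app_nth)
      ultimately show ?thesis unfolding g_def marginal_def by (simp add: algebra_simps)
    qed
    have "g ((m - k) + k) \<ge> (1 + 1 / real k) ^ k * g (m - k)"
      by (rule pow_growth[where m = m]) (use gstep g0 False in auto)
    moreover have "(m - k) + k = m" using False by simp
    moreover have "g m = f A" unfolding g_def A_def m_def by simp
    moreover have "(1 + 1 / real k) ^ k \<ge> 2"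
    proof -
      have "1 + real k * (1 / real k) \<le> (1 + 1 / real k) ^ k"
        proof (rule Bernoulli_inequality)
          have "0 \<le> 1 / real k" using kpos by simp
          then show "- 1 \<le> 1 / real k" by linarith
        qed
      then show ?thesis using kpos by simp
    qed
    ultimately have "f A \<ge> 2 * g (m - k)"
      using mult_right_mono[of 2 "(1 + 1 / real k) ^ k" "g (m - k)"] g0[of "m - k"] by simp
    then have fP: "f A \<ge> 2 * f P" unfolding g_def P_def .
    have AeqPA: "A = A' \<union> P" unfolding A_def A'_def P_def
      by (metis append_take_drop_id set_append sup_commute)
    have A'N: "A' \<subseteq> N" using AN unfolding A_def A'_def by (meson order_trans set_drop_subset)
    have "f (A' \<union> P) - f A' \<le> f ({} \<union> P) - f {}"
      by (rule sub_set[OF sub mono]) (use takeN A'N in \<open>auto simp: P_def\<close>)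
    moreover have "f {} \<ge> 0" using nonneg by blast
    ultimately have "f A - f A' \<le> f P" using AeqPA by simp
    then show ?thesis using fP unfolding A'_def by linarith
  qed
  show ?thesis unfolding out using opt2 half by linarith
qed

end
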